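(* Let $\alpha,n\in\mathbb{Q}$ with $n\neq0$. The torsion subgroup of $E_{\alpha,-n^2}(\mathbb{Q})$, where $$E_{\alpha,-n^2}:\ y^2=x^3+\alpha x^2-n^2x,$$ is not isomorphic to $\mathbb{Z}/2\mathbb{Z}\times\mathbb{Z}/8\mathbb{Z}$. *)

theory Defs
  imports Complex_Main "HOL-Algebra.Elementary_Groups"
begin

text \<open>Rational points of the curve y^2 = x^3 + a x^2 + b x, with None the point at infinity.\<close>

definition on_curve :: "rat \<Rightarrow> rat \<Rightarrow> (rat \<times> rat) option \<Rightarrow> bool" where
  "on_curve a b P = (case P of None \<Rightarrow> True
      | Some (x, y) \<Rightarrow> y^2 = x^3 + a * x^2 + b * x)"

definition ec_add :: "rat \<Rightarrow> rat \<Rightarrow> (rat \<times> rat) option \<Rightarrow> (rat \<times> rat) option \<Rightarrow> (rat \<times> rat) option" where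
  "ec_add a b P Q = (case P of None \<Rightarrow> Q | Some (x1, y1) \<Rightarrow>
     (case Q of None \<Rightarrow> P | Some (x2, y2) \<Rightarrow>
       (if x1 = x2 \<and> y1 = - y2 then None
        else let l = (if x1 = x2 then (3 * x1^2 + 2 * a * x1 + b) / (2 * y1)
                      else (y2 - y1) / (x2 - x1));
                 x3 = l^2 - a - x1 - x2;
                 y3 = - (l * (x3 - x1) + y1)
             in Some (x3, y3))))"

definition ec_mul :: "rat \<Rightarrow> rat \<Rightarrow> nat \<Rightarrow> (rat \<times> rat) option \<Rightarrow> (rat \<times> rat) option" where
  "ec_mul a b m P = ((ec_add a b P) ^^ m) None"

definition ec_points :: "rat \<Rightarrow> rat \<Rightarrow> (rat \<times> rat) option set" where
  "ec_points a b = {P. on_curve a b P}"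

definition ec_torsion_points :: "rat \<Rightarrow> rat \<Rightarrow> (rat \<times> rat) option set" where
  "ec_torsion_points a b = {P \<in> ec_points a b. \<exists>m>0. ec_mul a b m P = None}"

definition ec_torsion_group :: "rat \<Rightarrow> rat \<Rightarrow> (rat \<times> rat) option monoid" where
  "ec_torsion_group a b = \<lparr>carrier = ec_torsion_points a b, mult = ec_add a b, one = None\<rparr>"

end

theory Submission
  imports Defs "HOL-Computational_Algebra.Nth_Powers"
begin


lemma tan_oc:
  fixes a b x y L :: rat
  assumes c: "y^2 = x^3 + a*x^2 + b*x" and y: "y \<noteq> 0"
    and L: "L = (3*x^2+2*a*x+b)/(2*y)"
  shows "(-(L*((L^2 - a - x - x) - x) + y))^2 = (L^2 - a - x - x)^3 + a*(L^2 - a - x - x)^2 + b*(L^2 - a - x - x)"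
proof -
  have L': "2*y*L = 3*x^2+2*a*x+b" using y L by (simp add: field_simps)
  show ?thesis using c L' by algebra
qed

lemma chord_oc:
  fixes a b x1 y1 x2 y2 L :: rat
  assumes c1: "y1^2 = x1^3 + a*x1^2 + b*x1" and c2: "y2^2 = x2^3 + a*x2^2 + b*x2" and d: "x1 \<noteq> x2"
    and L: "L = (y2 - y1)/(x2 - x1)"
  shows "(-(L*((L^2 - a - x1 - x2) - x1) + y1))^2 = (L^2 - a - x1 - x2)^3 + a*(L^2 - a - x1 - x2)^2 + b*(L^2 - a - x1 - x2)"
proof -
  have L': "(x2 - x1)*L = y2 - y1" using d L by (simp add: field_simps)
  have d': "(x2 - x1) \<noteq> 0" using d by simp
  then obtain i where i: "(x2-x1)*i = 1" by (metis right_inverse)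
  show ?thesis using c1 c2 L' i by algebra
qed



definition ecneg :: "(rat \<times> rat) option \<Rightarrow> (rat \<times> rat) option" where
  "ecneg P = map_option (\<lambda>(x,y). (x,-y)) P"

lemma add_None_l[simp]: "ec_add a b None Q = Q" by (simp add: ec_add_def)
lemma add_None_r[simp]: "ec_add a b P None = P" by (cases P) (auto simp: ec_add_def)

lemma add_inv_case: "x1 = x2 \<Longrightarrow> y1 = -y2 \<Longrightarrow> ec_add a b (Some (x1,y1)) (Some (x2,y2)) = None"
  by (simp add: ec_add_def)

lemma add_tan:
  assumes "x1 = x2" "y1 = y2" "y1 \<noteq> 0" "2*y1*L = 3*x1^2+2*a*x1+b"
    "x3 = L^2 - a - 2*x1" "y3 = -(L*(x3-x1)+y1)"
  shows "ec_add a b (Some (x1,y1)) (Some (x2,y2)) = Some (x3,y3)"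
proof -
  have L: "L = (3*x1^2+2*a*x1+b)/(2*y1)" using assms(3,4) by (simp add: field_simps)
  have "y1 \<noteq> - y2" using assms(2,3) by simp
  then show ?thesis using assms(1,2,5,6) L by (simp add: ec_add_def Let_def)
qed

lemma add_chord:
  assumes "x1 \<noteq> x2" "(x2-x1)*L = y2 - y1"
    "x3 = L^2 - a - x1 - x2" "y3 = -(L*(x3-x1)+y1)"
  shows "ec_add a b (Some (x1,y1)) (Some (x2,y2)) = Some (x3,y3)"
proof -
  have L: "L = (y2 - y1)/(x2-x1)" using assms(1,2) by (simp add: field_simps)
  then show ?thesis using assms by (simp add: ec_add_def Let_def)
qed

lemma sq_eq_cases: "(y1::rat)^2 = y2^2 \<Longrightarrow> y1 = y2 \<or> y1 = -y2"
  by (metis power2_eq_iff)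

lemma oc_Some: "on_curve a b (Some (x,y)) \<longleftrightarrow> y^2 = x^3 + a*x^2 + b*x"
  by (simp add: on_curve_def)

lemma nonsing:
  fixes a b x :: rat
  assumes "b \<noteq> 0" "a^2 \<noteq> 4*b" "x^3 + a*x^2 + b*x = 0" "3*x^2+2*a*x+b = 0"
  shows False
proof -
  have "b*(a^2-4*b) = 0" using assms(3,4) by algebra
  then show False using assms(1,2) by simp
qed

lemma oc_add:
  assumes "on_curve a b P" "on_curve a b Q"
  shows "on_curve a b (ec_add a b P Q)"
proof (cases P)
  case None then show ?thesis using assms by simp
next
  case (Some p) obtain x1 y1 where p: "P = Some (x1,y1)" using Some by (cases p) auto
  show ?thesis
  proof (cases Q)
    case None then show ?thesis using assms p by simp
  next
    case (Some q) obtain x2 y2 where q: "Q = Some (x2,y2)" using Some by (cases q) auto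
    have c1: "y1^2 = x1^3 + a*x1^2+b*x1" and c2: "y2^2 = x2^3 + a*x2^2+b*x2"
      using assms p q by (simp_all add: on_curve_def)
    consider "x1 = x2 \<and> y1 = -y2" | "x1 = x2 \<and> y1 \<noteq> -y2" | "x1 \<noteq> x2" by blast
    then show ?thesis
    proof cases
      case 1 then show ?thesis by (simp add: p q ec_add_def on_curve_def)
    next
      case 2
      then have e: "y1 = y2" using c1 c2 sq_eq_cases by metis
      with 2 have y: "y1 \<noteq> 0" by auto
      define L where "L = (3*x1^2+2*a*x1+b)/(2*y1)"
      have L': "2*y1*L = 3*x1^2+2*a*x1+b" using y by (simp add: L_def field_simps)
      have "ec_add a b P Q = Some (L^2 - a - 2*x1, -(L*((L^2 - a - 2*x1)-x1)+y1))"
        unfolding p q using 2 e y L' by (intro add_tan) auto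
      moreover have "(-(L*((L^2 - a - 2*x1)-x1)+y1))^2 = (L^2 - a - 2*x1)^3 + a*(L^2 - a - 2*x1)^2 + b*(L^2 - a - 2*x1)"
        using c1 L' by algebra
      ultimately show ?thesis by (simp add: on_curve_def)
    next
      case 3
      define L where "L = (y2-y1)/(x2-x1)"
      have L': "(x2-x1)*L = y2 - y1" using 3 by (simp add: L_def field_simps)
      have "ec_add a b P Q = Some (L^2 - a - x1 - x2, -(L*((L^2 - a - x1 - x2)-x1)+y1))"
        unfolding p q using 3 L' by (intro add_chord) auto
      moreover have "(-(L*((L^2 - a - x1 - x2)-x1)+y1))^2 = (L^2 - a - x1 - x2)^3 + a*(L^2 - a - x1 - x2)^2 + b*(L^2 - a - x1 - x2)"
        using chord_oc[OF c1 c2 3 refl] unfolding L_def .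
      ultimately show ?thesis by (simp add: on_curve_def)
    qed
  qed
qed



lemma ecneg_Some[simp]: "ecneg (Some (x,y)) = Some (x,-y)" by (simp add: ecneg_def)
lemma ecneg_None[simp]: "ecneg None = None" by (simp add: ecneg_def)
lemma ecneg_ecneg[simp]: "ecneg (ecneg P) = P" by (cases P) (auto simp: ecneg_def)
lemma oc_neg: "on_curve a b P \<Longrightarrow> on_curve a b (ecneg P)" by (cases P) (auto simp: ecneg_def on_curve_def)
lemma add_neg: "ec_add a b P (ecneg P) = None" by (cases P) (auto simp: ecneg_def ec_add_def)

lemma Some_cases: obtains "P = None" | x y where "P = Some (x,y)"
  by (cases P) auto

lemma add_comm:
  assumes "on_curve a b P" "on_curve a b Q"
  shows "ec_add a b P Q = ec_add a b Q P"
proof (cases P rule: Some_cases)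
  case 1 then show ?thesis by simp
next
  case (2 x1 y1)
  show ?thesis
  proof (cases Q rule: Some_cases)
    case 1 then show ?thesis by simp
  next
    case (2 x2 y2)
    note p = \<open>P = Some (x1,y1)\<close> and q = \<open>Q = Some (x2,y2)\<close>
    have c1: "y1^2 = x1^3 + a*x1^2+b*x1" and c2: "y2^2 = x2^3 + a*x2^2+b*x2"
      using assms p q by (simp_all add: on_curve_def)
    show ?thesis
    proof (cases "x1 = x2")
      case True
      then have "y1 = y2 \<or> y1 = -y2" using c1 c2 sq_eq_cases by metis
      then show ?thesis
      proof
        assume "y1 = y2" then show ?thesis using True p q by simp
      next
        assume "y1 = -y2" then show ?thesis using True p q by (simp add: ec_add_def)
      qed
    next
      case False
      define L where "L = (y2-y1)/(x2-x1)"
      have L': "(x2-x1)*L = y2 - y1" using False by (simp add: L_def field_simps)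
      have L'': "(x1-x2)*L = y1 - y2" using L' by algebra
      have "ec_add a b P Q = Some (L^2 - a - x1 - x2, -(L*((L^2 - a - x1 - x2)-x1)+y1))"
        unfolding p q using False L' by (intro add_chord) auto
      moreover have "ec_add a b Q P = Some (L^2 - a - x2 - x1, -(L*((L^2 - a - x2 - x1)-x2)+y2))"
        unfolding p q using False L'' by (intro add_chord) auto
      moreover have "-(L*((L^2 - a - x1 - x2)-x1)+y1) = -(L*((L^2 - a - x2 - x1)-x2)+y2)"
        using L' by algebra
      ultimately show ?thesis by (simp add: algebra_simps)
    qed
  qed
qed

lemma neg_add:
  assumes "on_curve a b P" "on_curve a b Q"
  shows "ecneg (ec_add a b P Q) = ec_add a b (ecneg P) (ecneg Q)"
proof (cases P rule: Some_cases)
  case 1 then show ?thesis by simp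
next
  case (2 x1 y1)
  show ?thesis
  proof (cases Q rule: Some_cases)
    case 1 then show ?thesis by simp
  next
    case (2 x2 y2)
    note p = \<open>P = Some (x1,y1)\<close> and q = \<open>Q = Some (x2,y2)\<close>
    have c1: "y1^2 = x1^3 + a*x1^2+b*x1" and c2: "y2^2 = x2^3 + a*x2^2+b*x2"
      using assms p q by (simp_all add: on_curve_def)
    show ?thesis
    proof (cases "x1 = x2")
      case True
      then have "y1 = y2 \<or> y1 = -y2" using c1 c2 sq_eq_cases by metis
      then show ?thesis
      proof
        assume e: "y1 = y2"
        show ?thesis
        proof (cases "y1 = 0")
          case True then show ?thesis using e \<open>x1=x2\<close> p q by (simp add: ec_add_def)
        next
          case False
          define L where "L = (3*x1^2+2*a*x1+b)/(2*y1)"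
          have L': "2*y1*L = 3*x1^2+2*a*x1+b" using False by (simp add: L_def field_simps)
          have L'': "2*(-y1)*(-L) = 3*x1^2+2*a*x1+b" using L' by algebra
          have "ec_add a b P Q = Some (L^2 - a - 2*x1, -(L*((L^2 - a - 2*x1)-x1)+y1))"
            unfolding p q using True e False L' by (intro add_tan) auto
          moreover have "ec_add a b (ecneg P) (ecneg Q) = Some ((-L)^2 - a - 2*x1, -((-L)*(((-L)^2 - a - 2*x1)-x1)+ (-y1)))"
            unfolding p q ecneg_Some using True e False L'' by (intro add_tan[where L="-L"]) auto
          moreover have "ecneg (Some (L^2 - a - 2*x1, -(L*((L^2 - a - 2*x1)-x1)+y1))) = Some ((-L)^2 - a - 2*x1, -((-L)*(((-L)^2 - a - 2*x1)-x1)+ (-y1)))"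
            unfolding ecneg_Some option.inject prod.inject by (intro conjI; algebra)
          ultimately show ?thesis by simp
        qed
      next
        assume "y1 = -y2" then show ?thesis using True p q by (simp add: ec_add_def)
      qed
    next
      case False
      define L where "L = (y2-y1)/(x2-x1)"
      have L': "(x2-x1)*L = y2 - y1" using False by (simp add: L_def field_simps)
      have L'': "(x2-x1)*(-L) = (-y2) - (-y1)" using L' by algebra
      have "ec_add a b P Q = Some (L^2 - a - x1 - x2, -(L*((L^2 - a - x1 - x2)-x1)+y1))"
        unfolding p q using False L' by (intro add_chord) auto
      moreover have "ec_add a b (ecneg P) (ecneg Q) = Some ((-L)^2 - a - x1 - x2, -((-L)*(((-L)^2 - a - x1 - x2)-x1)+(-y1)))"
        unfolding p q ecneg_Some using False L'' by (intro add_chord[where L="-L"]) auto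
      ultimately show ?thesis by (simp add: algebra_simps)
    qed
  qed
qed



lemma cancel:
  assumes ns: "b \<noteq> 0" "a^2 \<noteq> 4*b" and oP: "on_curve a b P" and oX: "on_curve a b X"
  shows "ec_add a b (ecneg P) (ec_add a b P X) = X"
proof (cases P rule: Some_cases)
  case 1 then show ?thesis by simp
next
  case (2 u v)
  note p = \<open>P = Some (u,v)\<close>
  show ?thesis
  proof (cases X rule: Some_cases)
    case 1 then show ?thesis using add_comm[OF oc_neg[OF oP] oP] add_neg[of a b P] by simp
  next
    case (2 w z)
    note x = \<open>X = Some (w,z)\<close>
    have c1: "v^2 = u^3 + a*u^2+b*u" and c2: "z^2 = w^3 + a*w^2+b*w"
      using oP oX p x by (simp_all add: on_curve_def)
    consider "w = u \<and> z = -v" | "w = u \<and> z \<noteq> -v" | "w \<noteq> u" by blast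
    then show ?thesis
    proof cases
      case 1 then show ?thesis using p x by (simp add: ec_add_def)
    next
      case 2
      then have zv: "z = v" using c1 c2 sq_eq_cases by metis
      with 2 have v0: "v \<noteq> 0" by auto
      define L where "L = (3*u^2+2*a*u+b)/(2*v)"
      have L': "2*v*L = 3*u^2+2*a*u+b" using v0 by (simp add: L_def field_simps)
      define d1 where "d1 = L^2 - a - 2*u"
      define d2 where "d2 = -(L*(d1-u)+v)"
      have Y: "ec_add a b P X = Some (d1,d2)"
        unfolding p x d2_def d1_def using 2 zv v0 L' by (intro add_tan[where L=L]) auto
      show ?thesis
      proof (cases "d1 = u")
        case True
        have "d2 = -v" using True by (simp add: d2_def)
        have "ec_add a b (Some (u,-v)) (Some (d1,d2)) = Some (w,z)"
          apply (rule add_tan[where L="-L"])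
          using True \<open>d2 = -v\<close> v0 L' 2 zv d1_def by auto
        then show ?thesis using Y p x by simp
      next
        case False
        have "ec_add a b (Some (u,-v)) (Some (d1,d2)) = Some (w,z)"
          apply (rule add_chord[where L="-L"])
          using False 2 zv by (auto simp: d1_def d2_def algebra_simps)
        then show ?thesis using Y p x by simp
      qed
    next
      case 3
      define N where "N = (z-v)/(w-u)"
      have N': "(w-u)*N = z-v" using 3 by (simp add: N_def field_simps)
      obtain i where i: "(w-u)*i = 1" using 3 by (metis right_inverse right_minus_eq)
      define y1 where "y1 = N^2 - a - u - w"
      define y2 where "y2 = -(N*(y1-u)+v)"
      have Y: "ec_add a b P X = Some (y1,y2)"
        unfolding p x y1_def y2_def using 3 N' by (intro add_chord[where L=N]) auto
      consider "y1 = u \<and> y2 = v" | "y1 = u \<and> y2 \<noteq> v" | "y1 \<noteq> u" by blast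
      then show ?thesis
      proof cases
        case 1
        then have "v = 0" unfolding y2_def by auto
        have e1: "N^2 - a - u - w = u" using 1 by (simp add: y1_def)
        have "3*u^2+2*a*u+b = 0" using c1 c2 N' i e1 \<open>v = 0\<close> by algebra
        moreover have "u^3 + a*u^2 + b*u = 0" using c1 \<open>v = 0\<close> by simp
        ultimately show ?thesis using nonsing[OF ns] by blast
      next
        case 2
        then have y2v: "y2 = -v" by (simp add: y2_def)
        with 2 have v0: "v \<noteq> 0" by auto
        have e1: "N^2 - a - u - w = u" using 2 by (simp add: y1_def)
        obtain j where j: "v*j = 1" using v0 by (metis right_inverse)
        have NL: "2*v*N = 3*u^2+2*a*u+b" using c1 c2 N' i e1 j by algebra
        have "ec_add a b (Some (u,-v)) (Some (y1,y2)) = Some (w,z)"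
          apply (rule add_tan[where L="-N"])
          using 2 y2v v0 NL e1 N' by (auto simp: algebra_simps)
        then show ?thesis using Y p x by simp
      next
        case 3
        have "ec_add a b (Some (u,-v)) (Some (y1,y2)) = Some (w,z)"
          apply (rule add_chord[where L="-N"])
          using 3 N' by (auto simp: y1_def y2_def algebra_simps)
        then show ?thesis using Y p x by simp
      qed
    qed
  qed
qed



lemma id_gen:
  fixes a b u v w z L N M R d1 d2 y1 y2 x :: rat
  assumes "v^2 = u^3 + a*u^2 + b*u" "z^2 = w^3+a*w^2+b*w"
  "2*v*L = 3*u^2+2*a*u+b" "d1 = L^2 - a - 2*u" "d2 = -(L*(d1-u)+v)"
  "(w-u)*N = z - v" "y1 = N^2 - a - u - w" "y2 = -(N*(y1-u)+v)"
  "(w-d1)*M = z - d2" "(y1 - u)*R = y2 - v"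
  "v*iv = 1" "(w-d1)*i1 = 1" "(w-u)* i2 = 1" "(y1 - u)*i3 = 1"
  "x = M^2 - a - d1 - w"
shows "x = R^2 - a - u - y1" "M*(x-d1)+d2 = R*(x-u)+v"
proof -
  show 1: "x = R^2 - a - u - y1" using assms by algebra
  show "M*(x-d1)+d2 = R*(x-u)+v" using assms 1 by algebra
qed

lemma id_tan:
  fixes a b u v L N M R d1 d2 y1 y2 x :: rat
  assumes "v^2 = u^3 + a*u^2 + b*u" "d2^2 = d1^3+a*d1^2+b*d1"
  "2*v*L = 3*u^2+2*a*u+b" "d1 = L^2 - a - 2*u" "d2 = -(L*(d1-u)+v)"
  "(d1-u)*N = d2 - v" "y1 = N^2 - a - u - d1" "y2 = -(N*(y1-u)+v)"
  "2*d2*M = 3*d1^2+2*a*d1+b" "(y1 - u)*R = y2 - v"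
  "v*iv = 1" "d2*i1 = 1" "(d1-u)* i2 = 1" "(y1 - u)*i3 = 1"
  "x = M^2 - a - 2*d1"
shows "x = R^2 - a - u - y1" "M*(x-d1)+d2 = R*(x-u)+v"
proof -
  show 1: "x = R^2 - a - u - y1" using assms by algebra
  show "M*(x-d1)+d2 = R*(x-u)+v" using assms 1 by algebra
qed

lemma inv_ex: "(c::rat) \<noteq> 0 \<Longrightarrow> \<exists>i. c*i = 1" by (metis right_inverse)

lemma half_cases:
  assumes ns: "b \<noteq> 0" "a^2 \<noteq> 4*b" and oP: "on_curve a b P" and oX: "on_curve a b X"
    and p: "P = Some (u,v)" and Y: "ec_add a b P X = Some (u,y)"
  shows "X = None \<or> X = ecneg (ec_add a b P P)"
proof -
  have "on_curve a b (Some (u,y))" using oc_add[OF oP oX] Y by simp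
  then have "y = v \<or> y = -v" using oP p by (simp add: on_curve_def sq_eq_cases)
  have X: "X = ec_add a b (ecneg P) (Some (u,y))" using cancel[OF ns oP oX] Y by simp
  show ?thesis
  proof (cases "y = v")
    case True
    then have "X = ec_add a b (ecneg P) P" using X p by simp
    then show ?thesis using add_comm[OF oc_neg[OF oP] oP] add_neg[of a b P] by simp
  next
    case False
    then have "Some (u,y) = ecneg P" using \<open>y = v \<or> y = -v\<close> p by simp
    then have "X = ec_add a b (ecneg P) (ecneg P)" using X by simp
    then show ?thesis using neg_add[OF oP oP] by simp
  qed
qed



lemma dbl_assoc:
  assumes ns: "b \<noteq> 0" "a^2 \<noteq> 4*b" and oP: "on_curve a b P" and oX: "on_curve a b X"
  shows "ec_add a b (ec_add a b P P) X = ec_add a b P (ec_add a b P X)"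
proof (cases P rule: Some_cases)
  case 1 then show ?thesis by simp
next
  case (2 u v)
  note p = \<open>P = Some (u,v)\<close>
  have c1: "v^2 = u^3 + a*u^2+b*u" using oP p by (simp add: on_curve_def)
  show ?thesis
  proof (cases "v = 0")
    case True
    then have "ec_add a b P P = None" using p by (simp add: ec_add_def)
    moreover have "ecneg P = P" using p True by simp
    ultimately show ?thesis using cancel[OF ns oP oX] by simp
  next
    case False
    note v0 = False
    obtain iv where iv: "v*iv = 1" using inv_ex v0 by blast
    define L where "L = (3*u^2+2*a*u+b)/(2*v)"
    have L': "2*v*L = 3*u^2+2*a*u+b" using v0 by (simp add: L_def field_simps)
    define d1 where "d1 = L^2 - a - 2*u"
    define d2 where "d2 = -(L*(d1-u)+v)"
    have D: "ec_add a b P P = Some (d1,d2)"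
      unfolding p d2_def d1_def using v0 L' by (intro add_tan[where L=L]) auto
    have oD: "on_curve a b (Some (d1,d2))" using oc_add[OF oP oP] D by simp
    then have cD: "d2^2 = d1^3 + a*d1^2 + b*d1" by (simp add: on_curve_def)
    show ?thesis
    proof (cases X rule: Some_cases)
      case 1 then show ?thesis by simp
    next
      case (2 w z)
      note x = \<open>X = Some (w,z)\<close>
      have c2: "z^2 = w^3 + a*w^2+b*w" using oX x by (simp add: on_curve_def)
      consider "w = u \<and> z = v" | "w = u \<and> z = -v" | "w \<noteq> u \<and> w = d1 \<and> z = -d2"
        | "w \<noteq> u \<and> w = d1 \<and> z \<noteq> -d2" | "w \<noteq> u \<and> w \<noteq> d1"
        using c1 c2 sq_eq_cases by metis
      then show ?thesis
      proof cases
        case 1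
        then have "X = P" using p x by simp
        then show ?thesis using add_comm[OF oc_add[OF oP oP] oP] by simp
      next
        case 2
        then have xn: "X = ecneg P" using p x by simp
        have "ec_add a b (ec_add a b P P) X = ec_add a b (ecneg P) (ec_add a b P P)"
          using add_comm[OF oc_add[OF oP oP] oc_neg[OF oP]] xn by simp
        also have "\<dots> = P" using cancel[OF ns oP oP] .
        finally show ?thesis using xn add_neg[of a b P] by simp
      next
        case 3
        then have xn: "X = ecneg (ec_add a b P P)" using D x by simp
        have "ec_add a b (ecneg P) (ec_add a b P P) = P" using cancel[OF ns oP oP] .
        then have "ecneg (ec_add a b (ecneg P) (ec_add a b P P)) = ecneg P" by simp
        then have "ec_add a b P X = ecneg P"
          using neg_add[OF oc_neg[OF oP] oc_add[OF oP oP]] xn by simp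
        then show ?thesis using xn add_neg[of a b P] add_neg[of a b "ec_add a b P P"] by simp
      next
        case 4
        then have zd: "z = d2" "d2 \<noteq> 0" using c2 cD sq_eq_cases by (metis, metis add.inverse_neutral)
        obtain i1 where i1: "d2*i1 = 1" using inv_ex zd by blast
        obtain i2 where i2: "(d1-u)*i2 = 1" using inv_ex 4 by (metis right_minus_eq)
        define M where "M = (3*d1^2+2*a*d1+b)/(2*d2)"
        have M': "2*d2*M = 3*d1^2+2*a*d1+b" using zd by (simp add: M_def field_simps)
        define N where "N = (d2 - v)/(d1 - u)"
        have N': "(d1-u)*N = d2-v" using 4 by (simp add: N_def field_simps)
        define y1 where "y1 = N^2 - a - u - d1"
        define y2 where "y2 = -(N*(y1-u)+v)"
        have Y: "ec_add a b P X = Some (y1,y2)"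
          unfolding p x y1_def y2_def using 4 zd N' by (intro add_chord[where L=N]) auto
        have y1u: "y1 \<noteq> u"
        proof
          assume "y1 = u"
          then have "X = None \<or> X = ecneg (ec_add a b P P)" using half_cases[OF ns oP oX p] Y by simp
          then show False using x D zd by auto
        qed
        obtain i3 where i3: "(y1-u)*i3 = 1" using inv_ex y1u by (metis right_minus_eq)
        define R where "R = (y2 - v)/(y1 - u)"
        have R': "(y1-u)*R = y2-v" using y1u by (simp add: R_def field_simps)
        define xx where "xx = M^2 - a - 2*d1"
        note ids = id_tan[OF c1 cD L' d1_def d2_def N' y1_def y2_def M' R' iv i1 i2 i3 xx_def]
        have "ec_add a b (ec_add a b P P) X = Some (xx, -(M*(xx-d1)+d2))"
          unfolding D x using zd M' 4 by (intro add_tan[where L=M]) (auto simp: xx_def)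
        moreover have "ec_add a b P (Some (y1,y2)) = Some (xx, -(M*(xx-d1)+d2))"
          unfolding p using y1u R' ids by (intro add_chord[where L=R]) auto
        ultimately show ?thesis using Y by simp
      next
        case 5
        obtain i1 where i1: "(w-d1)*i1 = 1" using inv_ex 5 by (metis right_minus_eq)
        obtain i2 where i2: "(w-u)*i2 = 1" using inv_ex 5 by (metis right_minus_eq)
        define M where "M = (z - d2)/(w - d1)"
        have M': "(w-d1)*M = z-d2" using 5 by (simp add: M_def field_simps)
        define N where "N = (z - v)/(w - u)"
        have N': "(w-u)*N = z-v" using 5 by (simp add: N_def field_simps)
        define y1 where "y1 = N^2 - a - u - w"
        define y2 where "y2 = -(N*(y1-u)+v)"
        have Y: "ec_add a b P X = Some (y1,y2)"
          unfolding p x y1_def y2_def using 5 N' by (intro add_chord[where L=N]) auto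
        have y1u: "y1 \<noteq> u"
        proof
          assume "y1 = u"
          then have "X = None \<or> X = ecneg (ec_add a b P P)" using half_cases[OF ns oP oX p] Y by simp
          then show False using x D 5 by auto
        qed
        obtain i3 where i3: "(y1-u)*i3 = 1" using inv_ex y1u by (metis right_minus_eq)
        define R where "R = (y2 - v)/(y1 - u)"
        have R': "(y1-u)*R = y2-v" using y1u by (simp add: R_def field_simps)
        define xx where "xx = M^2 - a - d1 - w"
        note ids = id_gen[OF c1 c2 L' d1_def d2_def N' y1_def y2_def M' R' iv i1 i2 i3 xx_def]
        have "ec_add a b (ec_add a b P P) X = Some (xx, -(M*(xx-d1)+d2))"
          unfolding D x using M' 5 by (intro add_chord[where L=M]) (auto simp: xx_def)
        moreover have "ec_add a b P (Some (y1,y2)) = Some (xx, -(M*(xx-d1)+d2))"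
          unfolding p using y1u R' ids by (intro add_chord[where L=R]) auto
        ultimately show ?thesis using Y by simp
      qed
    qed
  qed
qed



lemma mul_Suc: "ec_mul a b (Suc m) P = ec_add a b P (ec_mul a b m P)"
  by (simp add: ec_mul_def)
lemma mul_0: "ec_mul a b 0 P = None" by (simp add: ec_mul_def)

lemma oc_mul: "on_curve a b P \<Longrightarrow> on_curve a b (ec_mul a b m P)"
proof (induction m)
  case 0 then show ?case by (simp add: mul_0 on_curve_def)
next
  case (Suc m) then show ?case by (simp add: mul_Suc oc_add)
qed

lemma mul_add: "ec_mul a b (k + m) P = (ec_add a b P ^^ k) (ec_mul a b m P)"
  by (simp add: ec_mul_def funpow_add)

lemma mul_dbl:
  assumes ns: "b \<noteq> 0" "a^2 \<noteq> 4*b" and oP: "on_curve a b P"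
  shows "ec_mul a b m (ec_add a b P P) = ec_mul a b (2*m) P"
proof (induction m)
  case 0 then show ?case by (simp add: mul_0)
next
  case (Suc m)
  have "ec_mul a b (Suc m) (ec_add a b P P) = ec_add a b (ec_add a b P P) (ec_mul a b (2*m) P)"
    using Suc by (simp add: mul_Suc)
  also have "\<dots> = ec_add a b P (ec_add a b P (ec_mul a b (2*m) P))"
    using dbl_assoc[OF ns oP oc_mul[OF oP]] .
  also have "\<dots> = ec_mul a b (2 * Suc m) P" by (simp add: mul_Suc)
  finally show ?case .
qed

lemma tors_dbl:
  assumes ns: "b \<noteq> 0" "a^2 \<noteq> 4*b" and P: "P \<in> ec_torsion_points a b"
  shows "ec_add a b P P \<in> ec_torsion_points a b"
proof -
  from P have oP: "on_curve a b P" and "\<exists>m>0. ec_mul a b m P = None"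
    by (auto simp: ec_torsion_points_def ec_points_def)
  then obtain m where m: "m > 0" "ec_mul a b m P = None" by blast
  have "ec_mul a b m (ec_add a b P P) = ec_mul a b (m + m) P" using mul_dbl[OF ns oP, of m] by (simp add: mult_2)
  also have "\<dots> = (ec_add a b P ^^ m) (ec_mul a b m P)" by (rule mul_add)
  also have "\<dots> = ec_mul a b m P" using m(2) by (simp add: ec_mul_def)
  finally have "ec_mul a b m (ec_add a b P P) = None" using m(2) by simp
  then show ?thesis using m(1) oc_add[OF oP oP] by (auto simp: ec_torsion_points_def ec_points_def)
qed

lemma None_tors: "None \<in> ec_torsion_points a b"
  unfolding ec_torsion_points_def ec_points_def
  by (auto simp: on_curve_def intro!: exI[of _ 1] simp: ec_mul_def)



lemma mod4_contra: "(A::nat) = B + C \<Longrightarrow> A mod 4 = 0 \<Longrightarrow> B mod 4 = 1 \<Longrightarrow> C mod 4 = 0 \<or> C mod 4 = 1 \<Longrightarrow> False"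
  by presburger

lemma sq_mod4: "(n::nat)^2 mod 4 = (if even n then 0 else 1)"
proof (cases "even n")
  case True then obtain k where "n = 2*k" by blast
  then have "n^2 = 4*(k*k)" by (simp add: power2_eq_square)
  then show ?thesis using True by simp
next
  case False then obtain k where "n = 2*k+1" using oddE by blast
  then have "n^2 = 4*(k*k+k) + 1" by (simp add: power2_eq_square algebra_simps)
  then show ?thesis using False by simp
qed

lemma coprime_halves:
  fixes A B p q :: nat
  assumes "coprime p q" "A + B = p" "B = A + q"
  shows "coprime A B"
proof (rule coprimeI)
  fix c assume c: "c dvd A" "c dvd B"
  then have "c dvd p" using assms(2) by fastforce
  moreover have "c dvd q" using c assms(3) by (metis dvd_add_right_iff)
  ultimately show "is_unit c" using assms(1) coprime_common_divisor by blast
qed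

lemma step2:
  fixes Ev Od k :: nat
  assumes cop: "coprime Ev Od" and eq: "Ev*Od = 4*k^4" and k: "k > 0" and od: "odd Od"
  shows "\<exists>r s. Ev = 4*r^4 \<and> Od = s^4 \<and> r > 0"
proof -
  have "coprime 2 Od" using od by simp
  then have c4: "coprime (2*2) Od" by (simp only: coprime_mult_left_iff)
  then have c4: "coprime 4 Od" by simp
  have "4 dvd Ev*Od" using eq by simp
  then have "4 dvd Ev" using c4 by (simp add: coprime_dvd_mult_left_iff)
  then obtain Ev' where Ev': "Ev = 4*Ev'" by blast
  have p: "Ev'*Od = k^4" using eq Ev' by simp
  have pos: "Ev' > 0" "Od > 0" using p k by (auto intro!: gr0I)
  have "coprime Ev' Od" using cop Ev' by simp
  moreover have "is_nth_power 4 (Ev'*Od)" using p by auto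
  ultimately have "is_nth_power 4 Ev'" "is_nth_power 4 Od"
    using is_nth_power_mult_coprime_natD pos by blast+
  then obtain r s where "Ev' = r^4" "Od = s^4" unfolding is_nth_power_def by blast
  then show ?thesis using Ev' pos by auto
qed

lemma step3:
  fixes x r s :: nat
  assumes xo: "odd x" and so: "odd s" and eq: "x^2 = 4*r^4 + s^4" and cop: "coprime (4*r^4) (s^4)"
    and r: "r > 0"
  shows "\<exists>M N. M < x \<and> M^4 = N^4 + s^2 \<and> N > 0"
proof -
  have "odd (s^2)" using so by simp
  then obtain b where b: "s^2 = 2*b+1" using oddE by blast
  obtain a where a: "x = 2*a+1" using xo oddE by blast
  have "s^4 < x^2" using eq r by simp
  then have sx: "s^2 < x" using power_less_imp_less_base[of "s^2" 2 x] by simp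
  define G1 where "G1 = a - b"
  define G2 where "G2 = a + b + 1"
  have x1: "x = s^2 + 2*G1" using a b sx by (simp add: G1_def)
  have g12: "G2 = G1 + s^2" using a b sx by (simp add: G1_def G2_def)
  have gsum: "G1 + G2 = x" using a b sx by (simp add: G1_def G2_def)
  have "(s^2 + 2*G1)^2 = 4*r^4 + s^4" using eq x1 by simp
  then have "s^4 + 4*(s^2*G1 + G1^2) = 4*r^4 + s^4"
    by (simp add: power2_eq_square algebra_simps power4_eq_xxxx)
  then have "s^2*G1 + G1^2 = r^4" by simp
  then have prod: "G1*G2 = r^4" using g12 by (simp add: algebra_simps power2_eq_square)
  have cxs: "coprime x (s^2)"
  proof (rule coprimeI)
    fix c assume c: "c dvd x" "c dvd s^2"
    then have "c dvd x^2" "c dvd s^4" by (auto simp: power2_eq_square power4_eq_xxxx)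
    then have "c dvd 4*r^4" using eq by (metis dvd_add_right_iff add.commute)
    then show "is_unit c" using \<open>c dvd s^4\<close> cop coprime_common_divisor by blast
  qed
  have cop12: "coprime G1 G2" by (rule coprime_halves[OF cxs gsum g12])
  have pos: "G1 > 0" "G2 > 0" using prod r by (auto intro!: gr0I)
  have "is_nth_power 4 (G1*G2)" using prod by auto
  then have "is_nth_power 4 G1" "is_nth_power 4 G2"
    using is_nth_power_mult_coprime_natD cop12 pos by blast+
  then obtain N M where NM: "G1 = N^4" "G2 = M^4" unfolding is_nth_power_def by blast
  have "M^4 = N^4 + s^2" using NM g12 by simp
  moreover have "N > 0" using NM pos by (auto intro!: gr0I)
  moreover have "M < x"
  proof -
    have "M > 0" using NM pos by (auto intro!: gr0I)
    then have "M \<le> M^4" by (simp add: self_le_power)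
    also have "\<dots> < x" using NM gsum pos by linarith
    finally show ?thesis .
  qed
  ultimately show ?thesis by blast
qed

lemma fermat_nat:
  fixes x y z :: nat
  shows "x^4 = y^4 + z^2 \<Longrightarrow> y > 0 \<Longrightarrow> z > 0 \<Longrightarrow> False"
proof (induction x arbitrary: y z rule: less_induct)
  case (less x)
  note eq = less.prems(1) and y0 = less.prems(2) and z0 = less.prems(3)
  have x0: "x > 0" using eq y0 by (auto intro!: gr0I)
  show False
  proof (cases "coprime x y")
    case False
    define g where "g = gcd x y"
    have g1: "g \<noteq> 1" using False by (simp add: g_def coprime_iff_gcd_eq_1)
    have g0: "g > 0" using y0 by (simp add: g_def)
    obtain x' where x': "x = g*x'" using gcd_dvd1[of x y] g_def by (metis dvdE)
    obtain y' where y': "y = g*y'" using gcd_dvd2[of x y] g_def by (metis dvdE)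
    have "g^4 dvd x^4" "g^4 dvd y^4" using x' y' by (simp_all add: power_mult_distrib)
    then have "g^4 dvd z^2" using eq by (metis dvd_add_right_iff)
    moreover have "(g^2)^2 dvd z^2 \<longleftrightarrow> g^2 dvd z" by (rule pow_divides_pow_iff) simp
    ultimately have "g^2 dvd z" by simp
    then obtain z' where z': "z = g^2*z'" by blast
    have "g^4 * x'^4 = g^4 * (y'^4 + z'^2)" using eq x' y' z'
      by (simp add: power_mult_distrib algebra_simps power_mult[symmetric])
    then have eq': "x'^4 = y'^4 + z'^2" using g0 by simp
    have "x' < x" using x' g0 g1 x0 by (metis One_nat_def less_one mult_less_cancel2 nat_mult_1 nat_neq_iff not_gr0 mult_0_right)
    moreover have "y' > 0" "z' > 0" using y' z' y0 z0 by (auto intro!: gr0I)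
    ultimately show False using less.IH eq' by blast
  next
    case True
    note cop = True
    have xodd: "odd x"
    proof
      assume ex: "even x"
      have "odd y"
      proof
        assume "even y"
        then have "2 dvd gcd x y" using ex by simp
        moreover have "gcd x y = 1" using cop by simp
        ultimately show False by simp
      qed
      have "x^4 mod 4 = 0" using ex sq_mod4[of "x^2"] by (simp add: power_mult[symmetric])
      moreover have "y^4 mod 4 = 1" using \<open>odd y\<close> sq_mod4[of "y^2"] by (simp add: power_mult[symmetric])
      moreover have "z^2 mod 4 = 0 \<or> z^2 mod 4 = 1" using sq_mod4[of z] by simp
      ultimately show False by (rule mod4_contra[OF eq])
    qed
    have yx: "y^2 < x^2"
    proof -
      have "y^4 < x^4" using eq z0 by simp
      then show ?thesis using power_less_imp_less_base[of "y^2" 2 "x^2"] by simp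
    qed
    show False
    proof (cases "even y")
      case False
      have "odd (y^4 + z^2)" using eq xodd by (metis even_power zero_less_numeral)
      then have zev: "even z" using False by simp
      have "odd (x^2)" using xodd by simp
      then obtain a where a: "x^2 = 2*a+1" using oddE by blast
      have "odd (y^2)" using False by simp
      then obtain b where b: "y^2 = 2*b+1" using oddE by blast
      define B2 where "B2 = a - b"
      define A2 where "A2 = a + b + 1"
      have xb: "x^2 = y^2 + 2*B2" using a b yx by (simp add: B2_def)
      have ab: "A2 = B2 + y^2" using a b yx by (simp add: A2_def B2_def)
      have abs: "B2 + A2 = x^2" using a b yx by (simp add: A2_def B2_def)
      obtain z1 where z1: "z = 2*z1" using zev by blast
      have "(x^2)^2 = y^4 + (2*z1)^2" using eq z1 by simp
      then have "(y^2 + 2*B2)^2 = y^4 + (2*z1)^2" by (simp only: xb)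
      then have "y^4 + 4*(y^2*B2 + B2^2) = y^4 + 4*z1^2"
        by (simp add: power2_eq_square algebra_simps power4_eq_xxxx)
      then have "z1^2 = y^2*B2 + B2^2" by simp
      then have prod: "A2*B2 = z1^2" using ab by (simp add: algebra_simps power2_eq_square)
      have cxy: "coprime (x^2) (y^2)" using cop by simp
      have cop12: "coprime B2 A2" by (rule coprime_halves[OF cxy abs ab])
      have pos: "A2 > 0" "B2 > 0" using ab xb yx by auto
      have "is_nth_power 2 (A2*B2)" using prod by auto
      then have "is_nth_power 2 A2" "is_nth_power 2 B2"
        using is_nth_power_mult_coprime_natD cop12 pos by (metis coprime_commute)+
      then obtain A B where AB: "A2 = A^2" "B2 = B^2" unfolding is_nth_power_def by blast
      have "A2^2 = B2^2 + x^2*y^2" using ab xb by (simp add: power2_eq_square algebra_simps)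
      then have eqA: "A^4 = B^4 + (x*y)^2" using AB by (simp add: power_mult[symmetric] power_mult_distrib)
      have "A2 < x^2" using abs pos by linarith
      then have "A^2 < x^2" using AB by simp
      then have "A < x" by (simp add: power_less_imp_less_base)
      moreover have "B > 0" using AB pos by (auto intro!: gr0I)
      moreover have "x*y > 0" using x0 y0 by simp
      ultimately show False using less.IH eqA by blast
    next
      case True
      have "odd (y^4 + z^2)" using eq xodd by (metis even_power zero_less_numeral)
      then have zod: "odd z" using True by simp
      have zx: "z < x^2"
      proof -
        have "z^2 < x^4" using eq y0 by simp
        then show ?thesis using power_less_imp_less_base[of z 2 "x^2"] by simp
      qed
      have "odd (x^2)" using xodd by simp
      then obtain a where a: "x^2 = 2*a+1" using oddE by blast
      obtain b where b: "z = 2*b+1" using zod oddE by blast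
      define H1 where "H1 = a - b"
      define H2 where "H2 = a + b + 1"
      have xh: "x^2 = z + 2*H1" using a b zx by (simp add: H1_def)
      have h12: "H2 = H1 + z" using a b zx by (simp add: H1_def H2_def)
      have hs: "H1 + H2 = x^2" using a b zx by (simp add: H1_def H2_def)
      obtain y1 where y1: "y = 2*y1" using True by blast
      have y10: "y1 > 0" using y1 y0 by simp
      have "(x^2)^2 = (2*y1)^4 + z^2" using eq y1 by simp
      then have "(z + 2*H1)^2 = (2*y1)^4 + z^2" by (simp only: xh)
      then have "z^2 + 4*(z*H1 + H1^2) = 4*(4*y1^4) + z^2"
        by (simp add: power2_eq_square algebra_simps power4_eq_xxxx)
      then have "z*H1 + H1^2 = 4*y1^4" by simp
      then have prod: "H1*H2 = 4*y1^4" using h12 by (simp add: algebra_simps power2_eq_square)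
      have cxz: "coprime (x^2) z"
      proof (rule coprimeI)
        fix c assume c: "c dvd x^2" "c dvd z"
        then have "c dvd x^4" "c dvd z^2" by (auto simp: power2_eq_square power4_eq_xxxx)
        then have "c dvd y^4" using eq by (metis dvd_add_left_iff)
        moreover have "coprime (x^4) (y^4)" using cop by simp
        ultimately show "is_unit c" using \<open>c dvd x^4\<close> coprime_common_divisor by blast
      qed
      have cop12: "coprime H1 H2" by (rule coprime_halves[OF cxz hs h12])
      have "odd (H1 + H2)" using hs xodd by simp
      then have "\<exists>r s. x^2 = 4*r^4 + s^4 \<and> coprime (4*r^4) (s^4) \<and> r > 0"
      proof (cases "odd H2")
        case True
        then obtain r s where rs: "H1 = 4*r^4" "H2 = s^4" "r > 0" using step2[OF cop12 prod y10] by blast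
        have "x^2 = 4*r^4 + s^4" using rs hs by simp
        moreover have "coprime (4*r^4) (s^4)" using rs cop12 by simp
        ultimately show ?thesis using rs(3) by blast
      next
        case False
        then have "odd H1" using \<open>odd (H1+H2)\<close> by simp
        moreover have "H2*H1 = 4*y1^4" using prod by (simp add: mult.commute)
        ultimately obtain r s where "H2 = 4*r^4" "H1 = s^4" "r > 0"
          using step2[OF _ _ y10] cop12 by (metis coprime_commute)
        note rs = this
        have "x^2 = 4*r^4 + s^4" using rs hs by simp
        moreover have "coprime (4*r^4) (s^4)" using rs cop12 by (simp add: coprime_commute)
        ultimately show ?thesis using rs(3) by blast
      qed
      then obtain r s where rs: "x^2 = 4*r^4 + s^4" "coprime (4*r^4) (s^4)" "r > 0" by blast
      have "odd (s^4)" using rs(1) xodd by (metis even_add even_mult_iff even_numeral even_power zero_less_numeral)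
      then have so: "odd s" by simp
      obtain M N where MN: "M < x" "M^4 = N^4 + s^2" "N > 0" using step3[OF xodd so rs] by blast
      have "s > 0" using so by (auto intro!: gr0I)
      then show False using less.IH MN by blast
    qed
  qed
qed



lemma rat_ex: "\<exists>p q. q > 0 \<and> (r::rat) * of_int q = of_int p"
proof -
  obtain p q where pq: "quotient_of r = (p,q)" by (cases "quotient_of r") auto
  have "q > 0" using quotient_of_denom_pos[OF pq] .
  moreover have "r = of_int p / of_int q" using quotient_of_div[OF pq] .
  ultimately show ?thesis by (intro exI[of _ p] exI[of _ q]) (simp add: field_simps)
qed

lemma rat_fermat:
  fixes t s n :: rat
  assumes eq: "t^4 = s^4 + n^2" and s0: "s \<noteq> 0" and n0: "n \<noteq> 0"
  shows False
proof -
  obtain pt qt where t: "qt > 0" "t * of_int qt = of_int pt" using rat_ex by blast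
  obtain ps qs where s: "qs > 0" "s * of_int qs = of_int ps" using rat_ex by blast
  obtain pn qn where n: "qn > 0" "n * of_int qn = of_int pn" using rat_ex by blast
  define d where "d = qt*qs*qn"
  define T where "T = pt*qs*qn"
  define S where "S = ps*qt*qn"
  define Nn where "Nn = pn*qt^2*qs^2*qn"
  have tD: "t * of_int d = of_int T" using t(2) unfolding d_def T_def
    by (metis (mono_tags, lifting) mult.assoc of_int_mult)
  have sD: "s * of_int d = of_int S" using s(2) unfolding d_def S_def
    by (metis (mono_tags, lifting) mult.assoc mult.commute mult.left_commute of_int_mult)
  have nD: "n * (of_int d)^2 = of_int Nn"
  proof -
    have "n * (of_int d)^2 = (n * of_int qn) * of_int (qt^2*qs^2*qn)"
      by (simp add: d_def power2_eq_square algebra_simps)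
    also have "\<dots> = of_int Nn" using n(2) by (simp add: Nn_def algebra_simps)
    finally show ?thesis .
  qed
  have "(t * of_int d)^4 = (s * of_int d)^4 + (n * (of_int d)^2)^2"
    using eq by algebra
  then have "(of_int T :: rat)^4 = of_int S^4 + of_int Nn^2" using tD sD nD by simp
  then have ieq: "T^4 = S^4 + Nn^2" by (metis of_int_add of_int_eq_iff of_int_power)
  have "d \<noteq> 0" using t s n by (simp add: d_def)
  then have S0: "S \<noteq> 0" and N0: "Nn \<noteq> 0" using sD nD s0 n0 by auto
  define a where "a = nat \<bar>T\<bar>"
  define b where "b = nat \<bar>S\<bar>"
  define c where "c = nat \<bar>Nn\<bar>"
  have "int (a^4) = int (b^4 + c^2)"
  proof -
    have "int (a^4) = \<bar>T\<bar>^4" by (simp add: a_def)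
    also have "\<dots> = T^4" by (simp add: power_even_abs_numeral)
    also have "\<dots> = S^4 + Nn^2" by (rule ieq)
    also have "\<dots> = \<bar>S\<bar>^4 + \<bar>Nn\<bar>^2" by (simp add: power_even_abs_numeral)
    also have "\<dots> = int (b^4 + c^2)" by (simp add: b_def c_def)
    finally show ?thesis .
  qed
  then have "a^4 = b^4 + c^2" by (simp only: of_nat_eq_iff)
  moreover have "b > 0" "c > 0" using S0 N0 by (auto simp: b_def c_def)
  ultimately show False using fermat_nat by blast
qed



lemma I0:
  fixes a b x y K e :: rat
  assumes "y^2 = x^3+a*x^2+b*x" "2*y*K = 3*x^2+2*a*x+b" "e = K^2 - a - 2*x"
  shows "4*y^2*e = (x^2 - b)^2"
  using assms by algebra

lemma I1:
  fixes a b u v L x e :: rat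
  assumes "v^2 = u^3+a*u^2+b*u" "2*v*L = 3*u^2+2*a*u+b" "x = L^2 - a - 2*u" "e^2 + a*e + b = 0"
  shows "4*v^2*(x - e) = ((u-e)^2 - (e^2-b))^2"
  using assms by algebra

lemma dirprod_mult: "monoid.mult (DirProd (integer_mod_group 2) (integer_mod_group 8)) (p1,p2) (q1,q2) = ((p1+q1) mod 2, (p2+q2) mod 8)"
  by (simp add: DirProd_def)

lemma dirprod_carrier: "carrier (DirProd (integer_mod_group 2) (integer_mod_group 8)) = {0..<2} \<times> {0..<8}"
  by (simp add: DirProd_def integer_mod_group_def)

theorem proposition7p8:
  fixes \<alpha> n :: rat
  assumes "n \<noteq> 0"
  shows "\<not> (ec_torsion_group \<alpha> (- (n^2)) \<cong> DirProd (integer_mod_group 2) (integer_mod_group 8))"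
proof
  define \<beta> where "\<beta> = - (n^2)"
  define G where "G = ec_torsion_group \<alpha> \<beta>"
  define H where "H = DirProd (integer_mod_group 2) (integer_mod_group 8)"
  assume "ec_torsion_group \<alpha> (- (n^2)) \<cong> DirProd (integer_mod_group 2) (integer_mod_group 8)"
  then obtain \<phi> where \<phi>: "\<phi> \<in> iso G H" unfolding is_iso_def G_def H_def \<beta>_def by auto
  have hom: "\<phi> \<in> hom G H" and bij: "bij_betw \<phi> (carrier G) (carrier H)"
    using \<phi> by (auto simp: iso_def)
  have n2: "n^2 > 0" using assms by simp
  have ns1: "\<beta> \<noteq> 0" using n2 by (simp add: \<beta>_def)
  have ns2: "\<alpha>^2 \<noteq> 4*\<beta>"
  proof -
    have "0 \<le> \<alpha>^2" by simp
    moreover have "4*\<beta> < 0" using n2 by (simp add: \<beta>_def)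
    ultimately show ?thesis by linarith
  qed
  note ns = ns1 ns2
  have cG: "carrier G = ec_torsion_points \<alpha> \<beta>" by (simp add: G_def ec_torsion_group_def)
  have mG: "\<And>x y. x \<otimes>\<^bsub>G\<^esub> y = ec_add \<alpha> \<beta> x y" by (simp add: G_def ec_torsion_group_def)
  have cH: "carrier H = {0..<2} \<times> {0..<8}" by (simp add: H_def carrier_integer_mod_group)
  have mH: "\<And>p1 p2 q1 q2. (p1,p2) \<otimes>\<^bsub>H\<^esub> (q1,q2) = ((p1+q1) mod 2, (p2+q2) mod 8)"
    by (simp add: H_def dirprod_mult)
  have hm: "\<And>x y. x \<in> carrier G \<Longrightarrow> y \<in> carrier G \<Longrightarrow> \<phi> (ec_add \<alpha> \<beta> x y) = \<phi> x \<otimes>\<^bsub>H\<^esub> \<phi> y"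
    using hom_mult[OF hom] mG by metis
  have inj: "inj_on \<phi> (carrier G)" and surj: "\<phi> ` carrier G = carrier H"
    using bij by (auto simp: bij_betw_def)
  have N: "None \<in> carrier G" using None_tors cG by simp
  obtain c1 c2 where c: "\<phi> None = (c1,c2)" by fastforce
  have "(c1,c2) \<in> carrier H" using c N bij bij_betwE by fastforce
  then have cr: "0 \<le> c1" "c1 < 2" "0 \<le> c2" "c2 < 8" using cH by auto
  have "\<phi> None = \<phi> None \<otimes>\<^bsub>H\<^esub> \<phi> None" using hm[OF N N] by simp
  then have "c1 = (c1 + c1) mod 2" "c2 = (c2 + c2) mod 8" using c mH by auto
  then have "c1 = 0" "c2 = 0" using cr by presburger+
  then have phiN: "\<phi> None = (0,0)" using c by simp
  have "(0,1) \<in> carrier H" using cH by simp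
  then obtain P where P: "P \<in> carrier G" "\<phi> P = (0,1)" using surj by (metis imageE)
  define Q where "Q = ec_add \<alpha> \<beta> P P"
  define R where "R = ec_add \<alpha> \<beta> Q Q"
  define S where "S = ec_add \<alpha> \<beta> R R"
  have Qc: "Q \<in> carrier G" using tors_dbl[OF ns] P cG Q_def by simp
  have Rc: "R \<in> carrier G" using tors_dbl[OF ns] Qc cG R_def by simp
  have Sc: "S \<in> carrier G" using tors_dbl[OF ns] Rc cG S_def by simp
  have phQ: "\<phi> Q = (0,2)" using hm[OF P(1) P(1)] P(2) mH Q_def by simp
  have phR: "\<phi> R = (0,4)" using hm[OF Qc Qc] phQ mH R_def by simp
  have phS: "\<phi> S = (0,0)" using hm[OF Rc Rc] phR mH S_def by simp
  have S0: "S = None" using inj_onD[OF inj, of S None] phS phiN Sc N by simp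
  have R0: "R \<noteq> None"
  proof
    assume "R = None" then show False using phR phiN by simp
  qed
  have Q0: "Q \<noteq> None"
  proof
    assume "Q = None" then show False using R0 R_def by simp
  qed
  have oP: "on_curve \<alpha> \<beta> P" using P cG by (simp add: ec_torsion_points_def ec_points_def)
  have oQ: "on_curve \<alpha> \<beta> Q" using Qc cG by (simp add: ec_torsion_points_def ec_points_def)
  have oR: "on_curve \<alpha> \<beta> R" using Rc cG by (simp add: ec_torsion_points_def ec_points_def)
  obtain e r where Rs: "R = Some (e,r)" using R0 by (cases R rule: Some_cases) auto
  have r0: "r = 0" using S0 S_def Rs by (simp add: ec_add_def Let_def split: if_splits)
  obtain x y where Qs: "Q = Some (x,y)" using Q0 by (cases Q rule: Some_cases) auto
  have y0: "y \<noteq> 0" using R0 R_def Qs by (auto simp: ec_add_def)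
  obtain u v where Ps: "P = Some (u,v)" using Q0 Q_def by (cases P rule: Some_cases) auto
  have v0: "v \<noteq> 0" using Q0 Q_def Ps by (auto simp: ec_add_def)
  have cP: "v^2 = u^3+\<alpha>*u^2+\<beta>*u" using oP Ps by (simp add: on_curve_def)
  have cQ: "y^2 = x^3+\<alpha>*x^2+\<beta>*x" using oQ Qs by (simp add: on_curve_def)
  have cR: "0 = e^3+\<alpha>*e^2+\<beta>*e" using oR Rs r0 by (simp add: on_curve_def)
  define L where "L = (3*u^2+2*\<alpha>*u+\<beta>)/(2*v)"
  have L': "2*v*L = 3*u^2+2*\<alpha>*u+\<beta>" using v0 by (simp add: L_def field_simps)
  have "Q = Some (L^2 - \<alpha> - 2*u, -(L*((L^2 - \<alpha> - 2*u)-u)+v))"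
    unfolding Q_def Ps using v0 L' by (intro add_tan[where L=L]) auto
  then have xL: "x = L^2 - \<alpha> - 2*u" using Qs by simp
  define K where "K = (3*x^2+2*\<alpha>*x+\<beta>)/(2*y)"
  have K': "2*y*K = 3*x^2+2*\<alpha>*x+\<beta>" using y0 by (simp add: K_def field_simps)
  have "R = Some (K^2 - \<alpha> - 2*x, -(K*((K^2 - \<alpha> - 2*x)-x)+y))"
    unfolding R_def Qs using y0 K' by (intro add_tan[where L=K]) auto
  then have eK: "e = K^2 - \<alpha> - 2*x" using Rs by simp
  have i0: "4*y^2*e = (x^2 - \<beta>)^2" using I0[OF cQ K' eK] .
  have e0: "e \<noteq> 0"
  proof
    assume "e = 0"
    then have "x^2 - \<beta> = 0" using i0 by simp
    then have "x^2 + n^2 = 0" by (simp add: \<beta>_def)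
    moreover have "x^2 + n^2 > 0" using n2 zero_le_power2[of x] by linarith
    ultimately show False by simp
  qed
  have er: "e^2 + \<alpha>*e + \<beta> = 0"
  proof -
    have "e * (e^2 + \<alpha>*e + \<beta>) = 0" using cR by (simp add: algebra_simps power2_eq_square power3_eq_cube)
    then show ?thesis using e0 by simp
  qed
  define s where "s = (x^2 - \<beta>)/(2*y)"
  have es: "e = s^2" using i0 y0 by (simp add: s_def field_simps power2_eq_square)
  define t where "t = ((u-e)^2 - (e^2-\<beta>))/(2*v)"
  have xt: "x - e = t^2" using I1[OF cP L' xL er] v0 by (simp add: t_def field_simps power2_eq_square)
  have "4*y^2*(e - e) = ((x-e)^2 - (e^2-\<beta>))^2" using I1[OF cQ K' eK er] .
  then have "(x-e)^2 = e^2 - \<beta>" by simp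
  then have "t^4 = s^4 + n^2" using xt es by (simp add: \<beta>_def power_mult[symmetric])
  moreover have "s \<noteq> 0" using es e0 by auto
  ultimately show False using rat_fermat assms by blast
qed


end
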